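(* For every hypothesis class $\mathcal{F}\subseteq\mathcal{Y}^{\mathcal{X}}$ (with $\mathcal{Y}$ finite), $\mathrm{DFFdim}(\mathrm{OtD}(\mathcal{F}))=\mathrm{Ldim}(\mathcal{F})$.
   Context: Setting. A teacher over $\mathcal{X},\mathcal{Y},\Phi$ ($\Phi$ a set of Boolean features on $\mathcal{X}$, $\bot$ a null symbol) is a pair $T=(\ell,\psi)$ with $\ell:\mathcal{X}\to\mathcal{Y}$ and $\psi:\mathcal{X}\times\mathcal{X}\to\Phi\cup\{\bot\}$ such that whenever $\ell(x)\neq\ell(\hat x)$, $\phi:=\psi(x,\hat x)\in\Phi$, $\phi(x)=1$ and $\phi(\hat x)=0$. A teacher class is a set of teachers. A history is a non-empty set $H\subseteq\mathcal{X}\times\mathcal{Y}$, $H_{\mathcal{X}}=\{x:\exists y,(x,y)\in H\}$; a teacher $(\ell,\psi)$ is consistent with $H$ if $\ell(x)=y$ for all $(x,y)\in H$; $\mathcal{T}_H$ is the set of teachers in $\mathcal{T}$ consistent with $H$. DFF dimension. A DFF tree is a rooted tree whose nodes are triples $\langle y,\phi,x\rangle$ with $y\in\mathcal{Y}\cup\{\bot\}$, $\phi\in\Phi\cup\{\bot\}$, $x\in\mathcal{X}\cup\{\bot\}$, such that the root has $y=\phi=\bot$, a node has $x=\bot$ iff it is a leaf, every edge is labeled by a pair $(\hat x,\hat y)\in\mathcal{X}\times\mathcal{Y}$, and every non-root node $\langle y,\phi,x\rangle$ with incoming edge $(\hat x,\hat y)$ has $\phi\neq\bot$ whenever $y\neq\hat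 y$. For a parent–child pair $\langle\cdot,\cdot,x\rangle\xrightarrow{(\hat x,\hat y)}\langle y,\phi,\cdot\rangle$ on a path, $(x,y)$ is called a labeled example in that path. A path from the root is consistent with a teacher $(\ell,\psi)$ if for every such parent–child pair on it, $\ell(x)=y$ and, if $y\neq\hat y$, $\psi(x,\hat x)=\phi$. Given $\mathcal{T}$ consistent with $H$, a DFF tree is shattered by $\mathcal{T}$ and $H$ if: (1) every non-root node $\langle y,\phi,x\rangle$ with incoming edge $(\hat x,\hat y)$ has $y\neq\hat y$; (2) the labels of the outgoing edges of each non-leaf node $v$ are exactly the pairs that belong to $H$ or are labeled examples in the path from the root to $v$; (3) every root-to-leaf path is consistent with some teacher in $\mathcal{T}_H$; (4) all root-to-leaf paths have the same number of edges, called the height. $\mathrm{DFFdim}(\mathcal{T},H)$ is the maximal height of a DFF tree shattered by $\mathcal{T}$ and $H$. $\mathrm{Ldim}$ is the (multiclass) Littlestone dimension: the maximal depth of a complete binary tree whose internal nodes are labeled by examples and whose two outgoing edges at each internal node are labeled by two distinct labels, such that for every root-to-leaf path some $f\in\mathcal{F}$ agrees with all (example, edge label) pairs on the path. Mapping OtD: given $\mathcal{F}\subseteq\mathcal{Y}^{\mathcal{X}}$, for each $y\in\mathcal{Y}$ let $\star_y\notin\mathcal{X}$ be a new distinct point, $H=\{(\star_y,y):y\in\mathcal{Y}\}$, $\mathcal{X}'=\mathcal{X}\cup H_{\mathcal{X}}$, and $\Phi=\{\mathbb{I}[x]:x\in\mathcal{X}'\}$ where $\mathbb{I}[x](x')=1$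 iff $x'=x$. For $f\in\mathcal{F}$ let $f':\mathcal{X}'\to\mathcal{Y}$ extend $f$ by $f'(\star_y)=y$, let $\psi_f(x,x')=\mathbb{I}[x]$, and $T_f=(f',\psi_f)$. Then $\mathrm{OtD}(\mathcal{F})=(\mathcal{T}_{\mathcal{F}},H)$ with $\mathcal{T}_{\mathcal{F}}=\{T_f:f\in\mathcal{F}\}$ (a teacher class over $\mathcal{X}',\mathcal{Y},\Phi$). *)

theory Defs
  imports "HOL-Library.Extended_Nat"
begin

text \<open>A teacher over X (the universe of type 'x), Y (the universe of type 'y) and a set of
 Boolean features Phi on X.  The null symbol is None.\<close>

type_synonym ('x,'y) teacher = "('x \<Rightarrow> 'y) \<times> ('x \<Rightarrow> 'x \<Rightarrow> ('x \<Rightarrow> bool) option)"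

definition is_teacher :: "('x \<Rightarrow> bool) set \<Rightarrow> ('x,'y) teacher \<Rightarrow> bool" where
  "is_teacher Phi T \<longleftrightarrow>
     (\<forall>x xh. fst T x \<noteq> fst T xh \<longrightarrow>
        (\<exists>\<phi>. snd T x xh = Some \<phi> \<and> \<phi> \<in> Phi \<and> \<phi> x \<and> \<not> \<phi> xh))"

definition consistent_hist :: "('x,'y) teacher \<Rightarrow> ('x \<times> 'y) set \<Rightarrow> bool" where
  "consistent_hist T H \<longleftrightarrow> (\<forall>(x,y)\<in>H. fst T x = y)"

definition teachers_consistent :: "('x,'y) teacher set \<Rightarrow> ('x \<times> 'y) set \<Rightarrow> ('x,'y) teacher set" where
  "teachers_consistent TT H = {T \<in> TT. consistent_hist T H}"

text \<open>A node is a triple (y, phi, x) of options (None = null symbol) together with its outgoing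
 edges, given as a partial map from edge labels (xh, yh) to child subtrees.\<close>

datatype ('x,'y,'p) dff =
  DNode (lab: "'y option") (feat: "'p option") (qry: "'x option")
        (kids: "'x \<times> 'y \<Rightarrow> ('x,'y,'p) dff option")

text \<open>A step of a path: the query x of the parent, the edge label (xh,yh), and the child node.\<close>

type_synonym ('x,'y,'p) step = "'x \<times> ('x \<times> 'y) \<times> ('x,'y,'p) dff"

inductive reach :: "('x,'y,'p) dff \<Rightarrow> ('x,'y,'p) step list \<Rightarrow> ('x,'y,'p) dff \<Rightarrow> bool"
  for t where
  reach_root: "reach t [] t"
| reach_step: "reach t p v \<Longrightarrow> qry v = Some x \<Longrightarrow> kids v e = Some c
     \<Longrightarrow> reach t (p @ [(x, e, c)]) c"

definition labeled_examples :: "('x,'y,'p) step list \<Rightarrow> ('x \<times> 'y) set" where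
  "labeled_examples p = {(x, y) | x e c y. (x, e, c) \<in> set p \<and> lab c = Some y}"

definition dff_tree :: "'p set \<Rightarrow> ('x,'y,'p) dff \<Rightarrow> bool" where
  "dff_tree Phi t \<longleftrightarrow>
     lab t = None \<and> feat t = None \<and>
     (\<forall>p v. reach t p v \<longrightarrow> (qry v = None \<longleftrightarrow> (\<forall>e. kids v e = None))) \<and>
     (\<forall>p v \<phi>. reach t p v \<longrightarrow> feat v = Some \<phi> \<longrightarrow> \<phi> \<in> Phi) \<and>
     (\<forall>p x xh yh c. reach t (p @ [(x, (xh, yh), c)]) c \<longrightarrow>
         lab c \<noteq> Some yh \<longrightarrow> feat c \<noteq> None)"

definition path_consistent :: "('x,'y) teacher \<Rightarrow> ('x,'y,'x \<Rightarrow> bool) step list \<Rightarrow> bool" where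
  "path_consistent T p \<longleftrightarrow>
     (\<forall>(x, (xh, yh), c) \<in> set p.
        lab c = Some (fst T x) \<and> (lab c \<noteq> Some yh \<longrightarrow> feat c = snd T x xh))"

definition dff_shattered ::
  "('x,'y) teacher set \<Rightarrow> ('x \<times> 'y) set \<Rightarrow> nat \<Rightarrow> ('x,'y,'x \<Rightarrow> bool) dff \<Rightarrow> bool" where
  "dff_shattered TT H d t \<longleftrightarrow>
     \<comment> \<open>(1)\<close>
     (\<forall>p x xh yh c. reach t (p @ [(x, (xh, yh), c)]) c \<longrightarrow> lab c \<noteq> Some yh) \<and>
     \<comment> \<open>(2)\<close>
     (\<forall>p v. reach t p v \<longrightarrow> qry v \<noteq> None \<longrightarrow>
        {e. kids v e \<noteq> None} = H \<union> labeled_examples p) \<and>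
     \<comment> \<open>(3)\<close>
     (\<forall>p v. reach t p v \<longrightarrow> qry v = None \<longrightarrow>
        (\<exists>T \<in> teachers_consistent TT H. path_consistent T p)) \<and>
     \<comment> \<open>(4) all root-to-leaf paths have d edges\<close>
     (\<forall>p v. reach t p v \<longrightarrow> qry v = None \<longrightarrow> length p = d)"

definition DFFdim :: "('x \<Rightarrow> bool) set \<Rightarrow> ('x,'y) teacher set \<Rightarrow> ('x \<times> 'y) set \<Rightarrow> enat" where
  "DFFdim Phi TT H = Sup {enat d | d. \<exists>t. dff_tree Phi t \<and> dff_shattered TT H d t}"

datatype ('x,'y) ltree = LLeaf | LNode 'x 'y "('x,'y) ltree" 'y "('x,'y) ltree"

fun lcomplete :: "nat \<Rightarrow> ('x,'y) ltree \<Rightarrow> bool" where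
  "lcomplete d LLeaf \<longleftrightarrow> d = 0"
| "lcomplete d (LNode x y1 l y2 r) \<longleftrightarrow>
     (\<exists>d'. d = Suc d' \<and> y1 \<noteq> y2 \<and> lcomplete d' l \<and> lcomplete d' r)"

fun lpaths :: "('x,'y) ltree \<Rightarrow> ('x \<times> 'y) list set" where
  "lpaths LLeaf = {[]}"
| "lpaths (LNode x y1 l y2 r) = ((#) (x, y1)) ` lpaths l \<union> ((#) (x, y2)) ` lpaths r"

definition Ldim :: "('x \<Rightarrow> 'y) set \<Rightarrow> enat" where
  "Ldim F = Sup {enat d | d. \<exists>t. lcomplete d t \<and>
                    (\<forall>p \<in> lpaths t. \<exists>f \<in> F. \<forall>(x, y) \<in> set p. f x = y)}"

text \<open>X' = X \<union> {star_y}: realised as the sum type, star_y = Inr y.\<close>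

definition otd_history :: "(('x + 'y) \<times> 'y) set" where
  "otd_history = {(Inr y, y) | y. True}"

definition otd_features :: "('x + 'y \<Rightarrow> bool) set" where
  "otd_features = {(\<lambda>x'. x' = x) | x. True}"

definition otd_teacher :: "('x \<Rightarrow> 'y) \<Rightarrow> ('x + 'y, 'y) teacher" where
  "otd_teacher f = (case_sum f (\<lambda>y. y), (\<lambda>x x'. Some (\<lambda>z. z = x)))"

definition otd_teachers :: "('x \<Rightarrow> 'y) set \<Rightarrow> ('x + 'y, 'y) teacher set" where
  "otd_teachers F = otd_teacher ` F"

end

theory Submission
  imports Defs
begin

lemma lpaths_nonempty: "lcomplete d t \<Longrightarrow> lpaths t \<noteq> {}"
  by (induction t arbitrary: d) auto

lemma le_nil[simp]: "labeled_examples [] = {}"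
  by (simp add: labeled_examples_def)

lemma le_snoc: "labeled_examples (p @ [(x,e,c)]) = labeled_examples p \<union> {(x,y) | y. lab c = Some y}"
  unfolding labeled_examples_def by (cases e) fastforce

lemma pc_snoc: "path_consistent T (p @ [(x,(xh,yh),c)]) \<longleftrightarrow> path_consistent T p \<and>
   lab c = Some (fst T x) \<and> (lab c \<noteq> Some yh \<longrightarrow> feat c = snd T x xh)"
  by (auto simp add: path_consistent_def)

lemma reach_last: "reach t p v \<Longrightarrow> (p = [] \<and> v = t) \<or> (\<exists>p' x e. p = p' @ [(x,e,v)])"
  by (induction rule: reach.induct) auto

lemma otd_fst_Inr[simp]: "fst (otd_teacher f) (Inr b) = b"
  by (simp add: otd_teacher_def)
lemma otd_fst_Inl[simp]: "fst (otd_teacher f) (Inl a) = f a"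
  by (simp add: otd_teacher_def)
lemma otd_snd[simp]: "snd (otd_teacher f) x xh = Some (\<lambda>z. z = x)"
  by (simp add: otd_teacher_def)

lemma dff_to_L:
  assumes sh: "dff_shattered (otd_teachers F) otd_history d t"
  shows "reach t p v \<Longrightarrow> \<exists>lt. lcomplete (d - length p) lt \<and> length p \<le> d \<and>
     (\<forall>q\<in>lpaths lt. \<exists>f\<in>F. (\<forall>(x,y)\<in>set q. f x = y) \<and> path_consistent (otd_teacher f) p)"
proof (induction v arbitrary: p)
  case (DNode lb ph qx ks)
  note S = sh[unfolded dff_shattered_def]
  have S1: "\<forall>p x xh yh c. reach t (p @ [(x, (xh, yh), c)]) c \<longrightarrow> lab c \<noteq> Some yh"
    using sh unfolding dff_shattered_def by blast
  have S2: "\<forall>p v. reach t p v \<longrightarrow> qry v \<noteq> None \<longrightarrow>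
        {e. kids v e \<noteq> None} = otd_history \<union> labeled_examples p"
    using sh unfolding dff_shattered_def by blast
  have S3: "\<forall>p v. reach t p v \<longrightarrow> qry v = None \<longrightarrow>
        (\<exists>T \<in> teachers_consistent (otd_teachers F) otd_history. path_consistent T p)"
    using sh unfolding dff_shattered_def by blast
  have S4: "\<forall>p v. reach t p v \<longrightarrow> qry v = None \<longrightarrow> length p = d"
    using sh unfolding dff_shattered_def by blast
  show ?case
  proof (cases qx)
    case None
    then have len: "length p = d" using S4 DNode.prems by simp
    obtain T where T: "T \<in> teachers_consistent (otd_teachers F) otd_history" "path_consistent T p"
      using S3 DNode.prems None by (meson dff.sel(3))
    then obtain f where f: "f \<in> F" "T = otd_teacher f"
      by (auto simp: teachers_consistent_def otd_teachers_def)
    show ?thesis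
      by (rule exI[of _ LLeaf]) (use len T f in auto)
  next
    case (Some x)
    have dom: "{e. ks e \<noteq> None} = otd_history \<union> labeled_examples p"
      using S2 DNode.prems Some by (metis dff.sel(3,4) option.distinct(1))
    have kid: "\<exists>c. ks (Inr y, y) = Some c" for y
    proof -
      have "(Inr y, y) \<in> {e. ks e \<noteq> None}" unfolding dom otd_history_def by auto
      then show ?thesis by auto
    qed
    have sub: "\<exists>lt. lcomplete (d - length (p @ [(x, (Inr y, y), c)])) lt \<and> length (p @ [(x, (Inr y, y), c)]) \<le> d \<and>
     (\<forall>q\<in>lpaths lt. \<exists>f\<in>F. (\<forall>(x,y)\<in>set q. f x = y) \<and> path_consistent (otd_teacher f) (p @ [(x, (Inr y, y), c)]))
      \<and> lab c \<noteq> Some y"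
      if kc: "ks (Inr y, y) = Some c" for y c
    proof -
      have r: "reach t (p @ [(x, (Inr y, y), c)]) c"
        using reach_step[OF DNode.prems, of x "(Inr y, y)" c] Some kc by simp
      have "c \<in> set_option (ks (Inr y, y))" using kc by simp
      then have "\<exists>lt. lcomplete (d - length (p @ [(x, (Inr y, y), c)])) lt \<and> length (p @ [(x, (Inr y, y), c)]) \<le> d \<and>
     (\<forall>q\<in>lpaths lt. \<exists>f\<in>F. (\<forall>(x,y)\<in>set q. f x = y) \<and> path_consistent (otd_teacher f) (p @ [(x, (Inr y, y), c)]))"
        using DNode.IH[OF rangeI \<open>c \<in> set_option (ks (Inr y, y))\<close> r] by blast
      moreover have "lab c \<noteq> Some y" using S1 r by blast
      ultimately show ?thesis by blast
    qed
    obtain c0 where c0: "ks (Inr undefined, undefined) = Some c0" using kid by blast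
    obtain lt0 where lt0: "lcomplete (d - Suc (length p)) lt0" "Suc (length p) \<le> d"
      "\<forall>q\<in>lpaths lt0. \<exists>f\<in>F. (\<forall>(x,y)\<in>set q. f x = y) \<and> path_consistent (otd_teacher f) (p @ [(x, (Inr undefined, undefined), c0)])"
      using sub[OF c0] by auto
    obtain q0 where "q0 \<in> lpaths lt0" using lpaths_nonempty[OF lt0(1)] by auto
    then obtain f0 where "path_consistent (otd_teacher f0) (p @ [(x, (Inr undefined, undefined), c0)])"
      using lt0(3) by blast
    then have "lab c0 = Some (fst (otd_teacher f0) x)" by (simp only: pc_snoc)
    define y1 where "y1 = fst (otd_teacher f0) x"
    have lc0: "lab c0 = Some y1" by (simp add: y1_def \<open>lab c0 = _\<close>)
    obtain c1 where c1: "ks (Inr y1, y1) = Some c1" using kid by blast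
    obtain lt1 where lt1: "lcomplete (d - Suc (length p)) lt1"
      "\<forall>q\<in>lpaths lt1. \<exists>f\<in>F. (\<forall>(x,y)\<in>set q. f x = y) \<and> path_consistent (otd_teacher f) (p @ [(x, (Inr y1, y1), c1)])"
      "lab c1 \<noteq> Some y1"
      using sub[OF c1] by auto
    obtain q1 where "q1 \<in> lpaths lt1" using lpaths_nonempty[OF lt1(1)] by auto
    then obtain f1 where "path_consistent (otd_teacher f1) (p @ [(x, (Inr y1, y1), c1)])"
      using lt1(2) by blast
    then have "lab c1 = Some (fst (otd_teacher f1) x)" by (simp only: pc_snoc)
    define y2 where "y2 = fst (otd_teacher f1) x"
    have lc1: "lab c1 = Some y2" by (simp add: y2_def \<open>lab c1 = _\<close>)
    have ne: "y1 \<noteq> y2" using lc1 lt1(3) by auto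
    obtain a where xa: "x = Inl a"
    proof (cases x)
      case (Inr b)
      then have "y1 = b" "y2 = b" by (simp_all add: y1_def y2_def)
      then show ?thesis using ne by simp
    qed
    show ?thesis
    proof (intro exI[of _ "LNode a y1 lt0 y2 lt1"] conjI ballI)
      show "lcomplete (d - length p) (LNode a y1 lt0 y2 lt1)"
        using lt0 lt1 ne by (auto intro!: exI[of _ "d - Suc (length p)"])
      show "length p \<le> d" using lt0 by simp
      fix q assume "q \<in> lpaths (LNode a y1 lt0 y2 lt1)"
      then consider q' where "q = (a,y1) # q'" "q' \<in> lpaths lt0" | q' where "q = (a,y2) # q'" "q' \<in> lpaths lt1"
        by auto
      then show "\<exists>f\<in>F. (\<forall>(x,y)\<in>set q. f x = y) \<and> path_consistent (otd_teacher f) p"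
      proof cases
        case 1
        then obtain f where "f \<in> F" "\<forall>(x,y)\<in>set q'. f x = y"
          "path_consistent (otd_teacher f) (p @ [(x, (Inr undefined, undefined), c0)])"
          using lt0(3) by blast
        then show ?thesis using 1 lc0 xa by (auto simp: pc_snoc)
      next
        case 2
        then obtain f where "f \<in> F" "\<forall>(x,y)\<in>set q'. f x = y"
          "path_consistent (otd_teacher f) (p @ [(x, (Inr y1, y1), c1)])"
          using lt1(2) by blast
        then show ?thesis using 2 lc1 xa by (auto simp: pc_snoc)
      qed
    qed
  qed
qed

primrec build :: "('x,'y) ltree \<Rightarrow> 'y option \<Rightarrow> ('x + 'y \<Rightarrow> bool) option \<Rightarrow> (('x + 'y) \<times> 'y) set
   \<Rightarrow> ('x + 'y, 'y, 'x + 'y \<Rightarrow> bool) dff" where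
  "build LLeaf lb ph S = DNode lb ph None (\<lambda>_. None)"
| "build (LNode a y1 l y2 r) lb ph S = DNode lb ph (Some (Inl a))
     (\<lambda>e. if e \<in> otd_history \<union> S then
        Some (if snd e \<noteq> y1 then build l (Some y1) (Some (\<lambda>z. z = Inl a)) (insert (Inl a, y1) S)
              else build r (Some y2) (Some (\<lambda>z. z = Inl a)) (insert (Inl a, y2) S))
      else None)"

lemma build_lab[simp]: "lab (build lt lb ph S) = lb" by (cases lt) auto
lemma build_feat[simp]: "feat (build lt lb ph S) = ph" by (cases lt) auto

lemma build_inv:
  assumes "lcomplete d lt0"
  shows "reach (build lt0 None None {}) p v \<Longrightarrow> \<exists>lt lb ph q. v = build lt lb ph (labeled_examples p) \<and>
     lcomplete (d - length p) lt \<and> length p \<le> d \<and> (\<forall>q'\<in>lpaths lt. q @ q' \<in> lpaths lt0) \<and>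
     (\<forall>(x,e,c)\<in>set p. \<exists>a y. x = Inl a \<and> lab c = Some y \<and> (a,y) \<in> set q \<and>
        feat c = Some (\<lambda>z. z = Inl a) \<and> lab c \<noteq> Some (snd e))"
proof (induction rule: reach.induct)
  case reach_root
  show ?case
    by (rule exI[of _ lt0], rule exI[of _ None], rule exI[of _ None], rule exI[of _ "[]"]) (use assms in auto)
next
  case (reach_step p v x e c)
  from reach_step.IH obtain lt lb ph q where I: "v = build lt lb ph (labeled_examples p)"
     "lcomplete (d - length p) lt" "length p \<le> d" "\<forall>q'\<in>lpaths lt. q @ q' \<in> lpaths lt0"
     "\<forall>(x,e,c)\<in>set p. \<exists>a y. x = Inl a \<and> lab c = Some y \<and> (a,y) \<in> set q \<and>
        feat c = Some (\<lambda>z. z = Inl a) \<and> lab c \<noteq> Some (snd e)" by blast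
  show ?case
  proof (cases lt)
    case LLeaf
    then show ?thesis using reach_step.hyps(2) I(1) by simp
  next
    case (LNode a y1 l y2 r)
    obtain d' where d': "d - length p = Suc d'" "y1 \<noteq> y2" "lcomplete d' l" "lcomplete d' r"
      using I(2) LNode by auto
    have dd: "d - Suc (length p) = d'" "Suc (length p) \<le> d" using d'(1) by auto
    have xa: "x = Inl a" using reach_step.hyps(2) I(1) LNode by simp
    have ein: "e \<in> otd_history \<union> labeled_examples p"
      using reach_step.hyps(3) I(1) LNode by (auto split: if_splits)
    show ?thesis
    proof (cases "snd e \<noteq> y1")
      case True
      have c: "c = build l (Some y1) (Some (\<lambda>z. z = Inl a)) (insert (Inl a, y1) (labeled_examples p))"
        using reach_step.hyps(3) I(1) LNode ein True by auto
      have le: "labeled_examples (p @ [(x, e, c)]) = insert (Inl a, y1) (labeled_examples p)"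
        using le_snoc[of p x e c] c xa by auto
      show ?thesis
        apply (rule exI[of _ l], rule exI[of _ "Some y1"], rule exI[of _ "Some (\<lambda>z. z = Inl a)"],
               rule exI[of _ "q @ [(a,y1)]"])
        using I d' dd le c xa True LNode by auto
    next
      case False
      have c: "c = build r (Some y2) (Some (\<lambda>z. z = Inl a)) (insert (Inl a, y2) (labeled_examples p))"
        using reach_step.hyps(3) I(1) LNode ein False by auto
      have le: "labeled_examples (p @ [(x, e, c)]) = insert (Inl a, y2) (labeled_examples p)"
        using le_snoc[of p x e c] c xa by auto
      show ?thesis
        apply (rule exI[of _ r], rule exI[of _ "Some y2"], rule exI[of _ "Some (\<lambda>z. z = Inl a)"],
               rule exI[of _ "q @ [(a,y2)]"])
        using I d' dd le c xa False LNode by auto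
    qed
  qed
qed

lemma L_to_dff:
  assumes lc: "lcomplete d lt0" and P: "\<forall>q \<in> lpaths lt0. \<exists>f \<in> F. \<forall>(x, y) \<in> set q. f x = y"
  shows "dff_tree otd_features (build lt0 None None {}) \<and> dff_shattered (otd_teachers F) otd_history d (build lt0 None None {})"
proof -
  let ?t = "build lt0 None None {}"
  note inv = build_inv[OF lc]
  have stepprop: "\<exists>a y. x = Inl a \<and> lab c = Some y \<and> feat c = Some (\<lambda>z. z = Inl a) \<and> lab c \<noteq> Some yh"
    if "reach ?t (p @ [(x, (xh, yh), c)]) c" for p x xh yh c
    using inv[OF that] by fastforce
  have rootlab: "lab ?t = None \<and> feat ?t = None" by (cases lt0) auto
  have A: "qry v = None \<longleftrightarrow> (\<forall>e. kids v e = None)" if r: "reach ?t p v" for p v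
  proof -
    obtain lt lb ph where "v = build lt lb ph (labeled_examples p)" using inv[OF r] by blast
    then show ?thesis by (cases lt) (auto simp: otd_history_def)
  qed
  have B: "\<phi> \<in> otd_features" if "reach ?t p v" "feat v = Some \<phi>" for p v \<phi>
  proof -
    from reach_last[OF that(1)] show ?thesis
    proof
      assume "p = [] \<and> v = ?t" then show ?thesis using rootlab that(2) by simp
    next
      assume "\<exists>p' x e. p = p' @ [(x, e, v)]"
      then obtain p' x xh yh where "p = p' @ [(x, (xh,yh), v)]" by auto
      then show ?thesis using stepprop that by (fastforce simp: otd_features_def)
    qed
  qed
  have C: "(qry v \<noteq> None \<longrightarrow> {e. kids v e \<noteq> None} = otd_history \<union> labeled_examples p) \<and>
      (qry v = None \<longrightarrow> (\<exists>T \<in> teachers_consistent (otd_teachers F) otd_history. path_consistent T p)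
         \<and> length p = d)"
    if r: "reach ?t p v" for p v
  proof -
    obtain lt lb ph q where I: "v = build lt lb ph (labeled_examples p)"
     "lcomplete (d - length p) lt" "length p \<le> d" "\<forall>q'\<in>lpaths lt. q @ q' \<in> lpaths lt0"
     "\<forall>(x,e,c)\<in>set p. \<exists>a y. x = Inl a \<and> lab c = Some y \<and> (a,y) \<in> set q \<and>
        feat c = Some (\<lambda>z. z = Inl a) \<and> lab c \<noteq> Some (snd e)" using inv[OF r] by blast
    show ?thesis
    proof (cases lt)
      case LLeaf
      have "q \<in> lpaths lt0" using I(4) LLeaf by auto
      then obtain f where f: "f \<in> F" "\<forall>(x, y) \<in> set q. f x = y" using P by blast
      have "otd_teacher f \<in> teachers_consistent (otd_teachers F) otd_history"
        using f by (auto simp: teachers_consistent_def otd_teachers_def consistent_hist_def otd_history_def)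
      moreover have "path_consistent (otd_teacher f) p"
        unfolding path_consistent_def
      proof (clarify)
        fix x xh yh c assume "(x, (xh, yh), c) \<in> set p"
        then obtain a y where "x = Inl a" "lab c = Some y" "(a,y) \<in> set q" "feat c = Some (\<lambda>z. z = Inl a)"
          using I(5) by fastforce
        then show "lab c = Some (fst (otd_teacher f) x) \<and> (lab c \<noteq> Some yh \<longrightarrow> feat c = snd (otd_teacher f) x xh)"
          using f(2) by auto
      qed
      ultimately show ?thesis using I LLeaf by auto
    next
      case (LNode a y1 l y2 r)
      then show ?thesis using I(1) by auto
    qed
  qed
  have T1: "dff_tree otd_features ?t"
    unfolding dff_tree_def
  proof (intro conjI allI impI)
    show "lab ?t = None" "feat ?t = None" using rootlab by auto
  next
    fix p v assume "reach ?t p v"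
    then show "(qry v = None) = (\<forall>e. kids v e = None)" by (rule A)
  next
    fix p v \<phi> assume "reach ?t p v" "feat v = Some \<phi>"
    then show "\<phi> \<in> otd_features" by (rule B)
  next
    fix p x xh yh c assume "reach ?t (p @ [(x, (xh, yh), c)]) c"
    then show "feat c \<noteq> None" using stepprop by fastforce
  qed
  have T2: "dff_shattered (otd_teachers F) otd_history d ?t"
    unfolding dff_shattered_def
  proof (intro conjI allI impI)
    fix p x xh yh c assume "reach ?t (p @ [(x, (xh, yh), c)]) c"
    then show "lab c \<noteq> Some yh" using stepprop by fastforce
  next
    fix p v assume "reach ?t p v" "qry v \<noteq> None"
    then show "{e. kids v e \<noteq> None} = otd_history \<union> labeled_examples p" using C by blast
  next
    fix p v assume "reach ?t p v" "qry v = None"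
    then show "\<exists>T \<in> teachers_consistent (otd_teachers F) otd_history. path_consistent T p" using C by blast
  next
    fix p v assume "reach ?t p v" "qry v = None"
    then show "length p = d" using C by blast
  qed
  show ?thesis using T1 T2 by blast
qed

theorem mainTheorem8:
  fixes F :: "('x \<Rightarrow> 'y::finite) set"
  shows "DFFdim otd_features (otd_teachers F) otd_history = Ldim F"
proof -
  have "(\<exists>t. dff_tree otd_features t \<and> dff_shattered (otd_teachers F) otd_history d t) \<longleftrightarrow>
        (\<exists>t. lcomplete d t \<and> (\<forall>p \<in> lpaths t. \<exists>f \<in> F. \<forall>(x, y) \<in> set p. f x = y))" for d
  proof
    assume "\<exists>t. dff_tree otd_features t \<and> dff_shattered (otd_teachers F) otd_history d t"
    then obtain t where t: "dff_shattered (otd_teachers F) otd_history d t" by blast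
    from dff_to_L[OF t reach_root] show "\<exists>t. lcomplete d t \<and> (\<forall>p \<in> lpaths t. \<exists>f \<in> F. \<forall>(x, y) \<in> set p. f x = y)"
      by fastforce
  next
    assume "\<exists>t. lcomplete d t \<and> (\<forall>p \<in> lpaths t. \<exists>f \<in> F. \<forall>(x, y) \<in> set p. f x = y)"
    then obtain t where "lcomplete d t" "\<forall>p \<in> lpaths t. \<exists>f \<in> F. \<forall>(x, y) \<in> set p. f x = y" by blast
    from L_to_dff[OF this] show "\<exists>t. dff_tree otd_features t \<and> dff_shattered (otd_teachers F) otd_history d t"
      by blast
  qed
  then show ?thesis unfolding DFFdim_def Ldim_def by simp
qed

end
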